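(* Let $\mathcal{X}=\prod_{r=1}^d\mathcal{Z}_r$ be a product of nonempty convex compact subsets of Euclidean spaces, $F$ an $L$-Lipschitz operator on $\mathcal{X}$ with components $F_r$, $B_F:=\max_r\sup_x\|F_r(x)\|_2$, and suppose the average $(\alpha,\ell,h)$-generalized Minty property with slackness $\gamma>0$ holds. Then after $T\in\mathbb{N}$ iterations of rescaled optimistic gradient descent with learning rate $\eta\le\frac14\sqrt{\frac{\ell}{h^3L^2+hB_F^2\alpha^2d}}$ there is an iterate $x^{(t)}$, $t\in\{1,\dots,T\}$, such that for every $x^\star\in\mathcal{X}$, $$\langle x^{(t)}-x^\star,F(x^{(t)})\rangle\le 2d\Big(\frac{\max_r D_{\mathcal{Z}_r}}{\eta\ell}+\frac{hB_F}{\ell}\Big)\sqrt{\frac{4\eta\gamma}{\ell}+\frac{2D_{\mathcal{X}}^2h}{\ell T}}.$$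
   Context: $D_{\mathcal{Y}}$ is the $\ell_2$ diameter of $\mathcal{Y}$. $\mathbf{1}_{\mathcal{Z}_r}$ is the indicator vector of the coordinates of $\mathcal{Z}_r$; $\circ$ is the coordinatewise product; vector inequalities are coordinatewise. $A(x)=\sum_r a_r(x)\mathbf{1}_{\mathcal{Z}_r}$ with each $a_r$ $\alpha$-Lipschitz and $0<\ell\le A(x)\le h$; $W(x)=\sum_r w_r(x)\mathbf{1}_{\mathcal{Z}_r}$ with $0<\ell\le W(x)\le h$. The average $(\alpha,\ell,h)$-generalized Minty property with slackness $\gamma$: for every $T$ and sequence $(x^{(t)})_{t\le T}$ in $\mathcal{X}$ there is $x^\star\in\mathcal{X}$ with $\frac1T\sum_{t=1}^T\langle x^{(t)}-x^\star,F(x^{(t)})\circ A(x^{(t)})\circ W(x^\star)\rangle\ge-\gamma$. Rescaled optimistic gradient descent: from arbitrary $x^{(0)}=\hat x^{(1)}\in\mathcal{X}$, $x^{(t)}=\Pi_{\mathcal{X}}(\hat x^{(t)}-\eta A(x^{(t-1)})\circ F(x^{(t-1)}))$, $\hat x^{(t+1)}=\Pi_{\mathcal{X}}(\hat x^{(t)}-\eta A(x^{(t)})\circ F(x^{(t)}))$ for $t\ge1$. *)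

theory Defs
  imports "HOL-Analysis.Analysis"
begin

text \<open>Coordinates are partitioned into d blocks by
  blk :: 'n => nat (coordinate i belongs to block blk i). The r-th Euclidean
  space is the coordinate subspace of the coordinates i with blk i = r.\<close>

definition blkind :: "('n::finite \<Rightarrow> nat) \<Rightarrow> nat \<Rightarrow> real^'n" where
  "blkind blk r = (\<chi> i. if blk i = r then 1 else 0)"

definition blkcomp :: "('n::finite \<Rightarrow> nat) \<Rightarrow> nat \<Rightarrow> real^'n \<Rightarrow> real^'n" where
  "blkcomp blk r x = (\<chi> i. if blk i = r then x $ i else 0)"

definition prodset :: "('n::finite \<Rightarrow> nat) \<Rightarrow> nat \<Rightarrow> (nat \<Rightarrow> (real^'n) set) \<Rightarrow> (real^'n) set" where
  "prodset blk d Z = {x. \<forall>r<d. blkcomp blk r x \<in> Z r}"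

definition cmul :: "real^'n::finite \<Rightarrow> real^'n \<Rightarrow> real^'n" (infixl "\<circ>\<^sub>c" 70) where
  "u \<circ>\<^sub>c v = (\<chi> i. u $ i * v $ i)"

definition blkvec :: "('n::finite \<Rightarrow> nat) \<Rightarrow> nat \<Rightarrow> (nat \<Rightarrow> real) \<Rightarrow> real^'n" where
  "blkvec blk d c = (\<Sum>r<d. c r *\<^sub>R blkind blk r)"

definition BF :: "('n::finite \<Rightarrow> nat) \<Rightarrow> nat \<Rightarrow> (real^'n) set \<Rightarrow> (real^'n \<Rightarrow> real^'n) \<Rightarrow> real" where
  "BF blk d X F = (MAX r\<in>{..<d}. SUP x\<in>X. norm (blkcomp blk r (F x)))"

end

theory Submission
  imports Defs
begin

definition wip :: "real^'n::finite \<Rightarrow> real^'n \<Rightarrow> real^'n \<Rightarrow> real" where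
  "wip \<omega> u v = (\<Sum>i\<in>UNIV. \<omega>$i * u$i * v$i)"

lemma blkvec_nth: "blk i < d \<Longrightarrow> blkvec blk d c $ i = c (blk i)"
  unfolding blkvec_def blkind_def by (simp add: if_distrib sum.delta' cong: if_cong)

lemma group_sum:
  fixes blk :: "'n::finite \<Rightarrow> nat"
  assumes "\<forall>i. blk i < d"
  shows "(\<Sum>i\<in>UNIV. G i) = (\<Sum>r<d. \<Sum>i\<in>UNIV. if blk i = r then G i else (0::real))"
proof -
  have "(\<Sum>i\<in>UNIV. G i) = (\<Sum>i\<in>UNIV. \<Sum>r<d. if blk i = r then G i else 0)"
    using assms by (simp add: sum.delta')
  also have "\<dots> = (\<Sum>r<d. \<Sum>i\<in>UNIV. if blk i = r then G i else 0)"
    by (rule sum.swap)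
  finally show ?thesis .
qed

lemma blkcomp_nth: "blkcomp blk r x $ i = (if blk i = r then x $ i else 0)"
  by (simp add: blkcomp_def)

lemma blkcomp_norm2: "(norm (blkcomp blk r v))\<^sup>2 = (\<Sum>i\<in>UNIV. if blk i = r then (v$i)\<^sup>2 else 0)"
  unfolding power2_norm_eq_inner inner_vec_def by (auto simp: blkcomp_nth power2_eq_square intro!: sum.cong)

lemma norm2_vec: "(norm (v::real^'n::finite))\<^sup>2 = (\<Sum>i\<in>UNIV. (v$i)\<^sup>2)"
  unfolding power2_norm_eq_inner inner_vec_def by (simp add: power2_eq_square)

lemma blkcomp_norm_le: "norm (blkcomp blk r v) \<le> norm v"
proof -
  have "(norm (blkcomp blk r v))\<^sup>2 \<le> (norm v)\<^sup>2"
    unfolding norm2_vec by (rule sum_mono) (simp add: blkcomp_nth)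
  thus ?thesis by (simp add: power2_le_iff_abs_le)
qed

lemma blkcomp_linear: "linear (blkcomp blk r)"
  by (rule linearI) (auto simp: vec_eq_iff blkcomp_nth)

lemma blkcomp_sum:
  assumes "\<forall>i. blk i < d"
  shows "(\<Sum>r<d. blkcomp blk r x) = x"
  using assms by (simp add: vec_eq_iff blkcomp_nth sum.delta')

lemma prodset_convex:
  assumes "\<forall>r<d. convex (Z r)"
  shows "convex (prodset blk d Z)"
  unfolding convex_def prodset_def
proof (safe)
  fix x y :: "real^'a" and u v :: real and r
  assume x: "\<forall>r<d. blkcomp blk r x \<in> Z r" and y: "\<forall>r<d. blkcomp blk r y \<in> Z r"
    and u: "0 \<le> u" and v: "0 \<le> v" and uv: "u + v = 1" and r: "r < d"
  have "blkcomp blk r (u *\<^sub>R x + v *\<^sub>R y) = u *\<^sub>R blkcomp blk r x + v *\<^sub>R blkcomp blk r y"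
    by (simp add: vec_eq_iff blkcomp_nth)
  also have "\<dots> \<in> Z r" using assms x y u v uv r unfolding convex_def by blast
  finally show "blkcomp blk r (u *\<^sub>R x + v *\<^sub>R y) \<in> Z r" .
qed

lemma prodset_closed:
  assumes "\<forall>r<d. closed (Z r)"
  shows "closed (prodset blk d Z)"
proof -
  have eq: "prodset blk d Z = (\<Inter>r\<in>{..<d}. blkcomp blk r -` Z r)"
    unfolding prodset_def by auto
  have "closed (blkcomp blk r -` Z r)" if "r < d" for r
    apply (rule continuous_closed_vimage)
    using assms that apply simp
    using blkcomp_linear[of blk r] linear_continuous_on[of "blkcomp blk r" UNIV]
    by (simp add: linear_conv_bounded_linear continuous_on_eq_continuous_within)
  thus ?thesis unfolding eq by auto
qed

lemma prodset_bounded: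
  assumes "\<forall>r<d. bounded (Z r)" and "\<forall>i. blk i < d"
  shows "bounded (prodset blk d Z)"
proof -
  have "\<forall>r<d. \<exists>R. \<forall>z\<in>Z r. norm z \<le> R" using assms(1) by (auto simp: bounded_iff)
  then obtain R where R: "\<And>r z. r < d \<Longrightarrow> z \<in> Z r \<Longrightarrow> norm z \<le> R r" by metis
  have "norm x \<le> (\<Sum>r<d. R r)" if "x \<in> prodset blk d Z" for x
  proof -
    have "norm x = norm (\<Sum>r<d. blkcomp blk r x)" using blkcomp_sum[OF assms(2)] by simp
    also have "\<dots> \<le> (\<Sum>r<d. norm (blkcomp blk r x))" by (rule norm_sum)
    also have "\<dots> \<le> (\<Sum>r<d. R r)"
      by (rule sum_mono) (use R that in \<open>auto simp: prodset_def\<close>)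
    finally show ?thesis .
  qed
  thus ?thesis by (auto simp: bounded_iff)
qed

lemma prodset_nonempty:
  assumes "\<forall>r<d. Z r \<noteq> {}" and "\<forall>r<d. Z r \<subseteq> {z. \<forall>i. blk i \<noteq> r \<longrightarrow> z $ i = 0}"
  shows "prodset blk d Z \<noteq> {}"
proof -
  define z where "z r = (SOME y. y \<in> Z r)" for r
  have zZ: "z r \<in> Z r" if "r < d" for r using assms(1) that unfolding z_def by (simp add: some_in_eq)
  define x where "x = (\<Sum>r<d. z r)"
  have "blkcomp blk s x = z s" if "s < d" for s
    unfolding vec_eq_iff
  proof
    fix i
    show "blkcomp blk s x $ i = z s $ i"
    proof (cases "blk i = s")
      case True
      have "x $ i = (\<Sum>r<d. z r $ i)" by (simp add: x_def)
      also have "\<dots> = (\<Sum>r<d. if r = s then z s $ i else 0)"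
        apply (rule sum.cong, simp)
        using zZ assms(2) True by fastforce
      also have "\<dots> = z s $ i" using that by simp
      finally show ?thesis using True by (simp add: blkcomp_nth)
    next
      case False
      then show ?thesis using zZ[OF that] assms(2) that by (auto simp: blkcomp_nth)
    qed
  qed
  hence "x \<in> prodset blk d Z" using zZ by (simp add: prodset_def)
  thus ?thesis by blast
qed

lemma block_vi:
  fixes blk :: "'n::finite \<Rightarrow> nat"
  assumes X: "X = prodset blk d Z" and p: "p \<in> X" and z: "z \<in> X"
    and vi: "\<forall>z\<in>X. inner (y - p) (z - p) \<le> 0"
  shows "(\<Sum>i\<in>UNIV. if blk i = r then (y-p)$i * (z-p)$i else 0) \<le> 0"
proof -
  define z' where "z' = p + blkcomp blk r (z - p)"
  have "blkcomp blk s z' = (if s = r then blkcomp blk r z else blkcomp blk s p)" for s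
    by (auto simp: vec_eq_iff blkcomp_nth z'_def)
  hence "z' \<in> X" using p z unfolding X prodset_def by auto
  hence "inner (y - p) (z' - p) \<le> 0" using vi by blast
  moreover have "inner (y - p) (z' - p) = (\<Sum>i\<in>UNIV. if blk i = r then (y-p)$i * (z-p)$i else 0)"
    unfolding z'_def inner_vec_def by (auto simp: blkcomp_nth intro!: sum.cong)
  ultimately show ?thesis by simp
qed

lemma weighted_vi:
  fixes blk :: "'n::finite \<Rightarrow> nat"
  assumes rng: "\<forall>i. blk i < d" and wc: "\<forall>i. \<omega>$i = c (blk i)" and wnn: "\<forall>i. 0 \<le> \<omega>$i"
    and bvi: "\<And>r. (\<Sum>i\<in>UNIV. if blk i = r then (u::real^'n)$i * v$i else 0) \<le> 0"
  shows "wip \<omega> u v \<le> 0"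
proof -
  have "wip \<omega> u v = (\<Sum>r<d. \<Sum>i\<in>UNIV. if blk i = r then \<omega>$i * u$i * v$i else 0)"
    unfolding wip_def by (rule group_sum[OF rng])
  also have "\<dots> = (\<Sum>r<d. c r * (\<Sum>i\<in>UNIV. if blk i = r then u$i * v$i else 0))"
    by (auto simp: sum_distrib_left wc intro!: sum.cong)
  also have "\<dots> \<le> 0"
  proof (rule sum_nonpos)
    fix r
    show "c r * (\<Sum>i\<in>UNIV. if blk i = r then u$i * v$i else 0) \<le> 0"
    proof (cases "\<exists>i. blk i = r")
      case True
      then obtain i where "blk i = r" by blast
      hence "0 \<le> c r" using wc wnn by metis
      thus ?thesis using bvi[of r] by (simp add: mult_nonneg_nonpos)
    next
      case False
      thus ?thesis by simp
    qed
  qed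
  finally show ?thesis .
qed

lemma proj_wvi:
  fixes blk :: "'n::finite \<Rightarrow> nat"
  assumes X: "X = prodset blk d Z" and cl: "closed X" and cv: "convex X" and ne: "X \<noteq> {}"
    and rng: "\<forall>i. blk i < d" and wc: "\<forall>i. \<omega>$i = c (blk i)" and wnn: "\<forall>i. 0 \<le> \<omega>$i"
    and z: "z \<in> X"
  shows "wip \<omega> (y - closest_point X y) (z - closest_point X y) \<le> 0"
proof -
  let ?p = "closest_point X y"
  have p: "?p \<in> X" using closest_point_in_set[OF cl ne] .
  have vi: "\<forall>z\<in>X. inner (y - ?p) (z - ?p) \<le> 0" using closest_point_dot[OF cv cl] by blast
  show ?thesis
    by (rule weighted_vi[OF rng wc wnn]) (rule block_vi[OF X p z vi])
qed

lemma wip_sq_nonneg: "\<forall>i. 0 \<le> \<omega>$i \<Longrightarrow> 0 \<le> wip \<omega> v v"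
  unfolding wip_def by (auto intro!: sum_nonneg simp: mult.assoc)

lemma wip_sq_lower: "\<forall>i. l \<le> \<omega>$i \<Longrightarrow> l * (norm v)\<^sup>2 \<le> wip \<omega> v v"
  unfolding wip_def norm2_vec sum_distrib_left
  by (rule sum_mono) (metis mult.assoc mult_right_mono zero_le_square power2_eq_square)

lemma wip_sq_upper: "\<forall>i. \<omega>$i \<le> h \<Longrightarrow> wip \<omega> v v \<le> h * (norm v)\<^sup>2"
  unfolding wip_def norm2_vec sum_distrib_left
  by (rule sum_mono) (metis mult.assoc mult_right_mono zero_le_square power2_eq_square)

lemma wip_young:
  assumes "\<forall>i. 0 \<le> \<omega>$i"
  shows "\<eta> * wip \<omega> u v \<le> \<eta>\<^sup>2/2 * wip \<omega> u u + wip \<omega> v v / 2"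
proof -
  have "\<eta> * wip \<omega> u v = (\<Sum>i\<in>UNIV. \<omega>$i * (\<eta> * u$i * v$i))"
    unfolding wip_def sum_distrib_left by (simp add: algebra_simps)
  also have "\<dots> \<le> (\<Sum>i\<in>UNIV. \<omega>$i * (\<eta>\<^sup>2/2 * u$i * u$i + v$i * v$i / 2))"
  proof (rule sum_mono)
    fix i
    have "\<eta> * u$i * v$i \<le> \<eta>\<^sup>2/2 * u$i * u$i + v$i * v$i / 2"
    proof -
      have "0 \<le> (\<eta> * u$i - v$i)\<^sup>2" by simp
      thus ?thesis by (simp add: power2_eq_square algebra_simps)
    qed
    thus "\<omega>$i * (\<eta> * u$i * v$i) \<le> \<omega>$i * (\<eta>\<^sup>2/2 * u$i * u$i + v$i * v$i / 2)"
      using assms by (simp add: mult_left_mono)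
  qed
  also have "\<dots> = \<eta>\<^sup>2/2 * wip \<omega> u u + wip \<omega> v v / 2"
    unfolding wip_def sum_distrib_left sum_divide_distrib sum.distrib[symmetric]
    by (rule sum.cong) (auto simp: algebra_simps)
  finally show ?thesis .
qed

lemma step_ineq:
  fixes \<omega> xh xh' xt xs g g0 :: "real^'n::finite"
  assumes wnn: "\<forall>i. 0 \<le> \<omega>$i"
    and VIa: "wip \<omega> ((xh - \<eta> *\<^sub>R g0) - xt) (xh' - xt) \<le> 0"
    and VIb: "wip \<omega> ((xh - \<eta> *\<^sub>R g) - xh') (xs - xh') \<le> 0"
    and VIc: "wip \<omega> ((xh - \<eta> *\<^sub>R g) - xh') (xt - xh') \<le> 0"
    and cross: "\<eta>\<^sup>2 * wip \<omega> (g - g0) (g - g0) \<le> K"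
  shows "\<eta> * wip \<omega> g (xt - xs) \<le> wip \<omega> (xh - xs) (xh - xs) / 2 - wip \<omega> (xh' - xs) (xh' - xs) / 2
          - wip \<omega> (xt - xh) (xt - xh) / 2 - wip \<omega> (xt - xh') (xt - xh') / 2 + K"
proof -
  have I: "\<eta> * wip \<omega> g (xt - xs) = wip \<omega> (xh - xs) (xh - xs) / 2 - wip \<omega> (xh' - xs) (xh' - xs) / 2
          - wip \<omega> (xt - xh) (xt - xh) / 2 - wip \<omega> (xt - xh') (xt - xh') / 2
          + \<eta> * wip \<omega> (g - g0) (xt - xh')
          + wip \<omega> ((xh - \<eta> *\<^sub>R g0) - xt) (xh' - xt) + wip \<omega> ((xh - \<eta> *\<^sub>R g) - xh') (xs - xh')"
    unfolding wip_def
    apply (simp only: sum.distrib[symmetric] sum_subtractf[symmetric] sum_distrib_left sum_divide_distrib)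
    apply (rule sum.cong, simp)
    apply (simp add: field_simps)
    done
  have J: "wip \<omega> ((xh - \<eta> *\<^sub>R g0) - xt) (xh' - xt) + wip \<omega> ((xh - \<eta> *\<^sub>R g) - xh') (xt - xh')
      = wip \<omega> (xt - xh') (xt - xh') - \<eta> * wip \<omega> (g - g0) (xt - xh')"
    unfolding wip_def
    apply (simp only: sum.distrib[symmetric] sum_subtractf[symmetric] sum_distrib_left sum_divide_distrib)
    apply (rule sum.cong, simp)
    apply (simp add: field_simps)
    done
  have Y: "\<eta> * wip \<omega> (g - g0) (xt - xh') \<le> \<eta>\<^sup>2/2 * wip \<omega> (g - g0) (g - g0) + wip \<omega> (xt - xh') (xt - xh') / 2"
    by (rule wip_young[OF wnn])
  have C: "\<eta> * wip \<omega> (g - g0) (xt - xh') \<le> K" using J Y VIa VIc cross by linarith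
  show ?thesis using I C VIa VIb by linarith
qed

lemma sq_le_of_abs_le: "\<bar>x::real\<bar> \<le> y \<Longrightarrow> x\<^sup>2 \<le> y\<^sup>2"
  by (metis abs_ge_zero order_trans power2_abs power_mono)

lemma g_diff:
  fixes blk :: "'n::finite \<Rightarrow> nat" and A1 A0 F1 F0 :: "real^'n"
  assumes rng: "\<forall>i. blk i < d"
    and A1h: "\<forall>i. \<bar>A1$i\<bar> \<le> h"
    and A1c: "\<forall>i. A1$i = c1 (blk i)" and A0c: "\<forall>i. A0$i = c0 (blk i)"
    and cl: "\<forall>r<d. \<bar>c1 r - c0 r\<bar> \<le> \<alpha> * \<delta>"
    and Fl: "norm (F1 - F0) \<le> L * \<delta>"
    and FB: "\<forall>r<d. norm (blkcomp blk r F0) \<le> B"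
  shows "(norm (A1 \<circ>\<^sub>c F1 - A0 \<circ>\<^sub>c F0))\<^sup>2 \<le> 2 * (h\<^sup>2 * L\<^sup>2 + real d * \<alpha>\<^sup>2 * B\<^sup>2) * \<delta>\<^sup>2"
proof -
  have "(norm (A1 \<circ>\<^sub>c F1 - A0 \<circ>\<^sub>c F0))\<^sup>2 = (\<Sum>i\<in>UNIV. (A1$i * (F1$i - F0$i) + (c1 (blk i) - c0 (blk i)) * F0$i)\<^sup>2)"
    unfolding norm2_vec by (rule sum.cong) (auto simp: cmul_def A1c A0c algebra_simps)
  also have "\<dots> \<le> (\<Sum>i\<in>UNIV. 2 * (A1$i * (F1$i - F0$i))\<^sup>2 + 2 * ((c1 (blk i) - c0 (blk i)) * F0$i)\<^sup>2)"
  proof (rule sum_mono)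
    fix i
    have "0 \<le> (A1$i * (F1$i - F0$i) - (c1 (blk i) - c0 (blk i)) * F0$i)\<^sup>2" by simp
    thus "(A1$i * (F1$i - F0$i) + (c1 (blk i) - c0 (blk i)) * F0$i)\<^sup>2
        \<le> 2 * (A1$i * (F1$i - F0$i))\<^sup>2 + 2 * ((c1 (blk i) - c0 (blk i)) * F0$i)\<^sup>2"
      by (simp add: power2_eq_square algebra_simps)
  qed
  also have "\<dots> = 2 * (\<Sum>i\<in>UNIV. (A1$i * (F1$i - F0$i))\<^sup>2) + 2 * (\<Sum>i\<in>UNIV. ((c1 (blk i) - c0 (blk i)) * F0$i)\<^sup>2)"
    by (simp add: sum.distrib sum_distrib_left)
  also have "\<dots> \<le> 2 * (h\<^sup>2 * L\<^sup>2 * \<delta>\<^sup>2) + 2 * (real d * \<alpha>\<^sup>2 * B\<^sup>2 * \<delta>\<^sup>2)"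
  proof -
    have "(\<Sum>i\<in>UNIV. (A1$i * (F1$i - F0$i))\<^sup>2) \<le> (\<Sum>i\<in>UNIV. h\<^sup>2 * (F1$i - F0$i)\<^sup>2)"
    proof (rule sum_mono)
      fix i
      have "(A1$i)\<^sup>2 \<le> h\<^sup>2" using A1h sq_le_of_abs_le by blast
      thus "(A1$i * (F1$i - F0$i))\<^sup>2 \<le> h\<^sup>2 * (F1$i - F0$i)\<^sup>2"
        by (simp add: power_mult_distrib mult_right_mono)
    qed
    also have "\<dots> = h\<^sup>2 * (norm (F1 - F0))\<^sup>2" by (simp add: norm2_vec sum_distrib_left)
    also have "\<dots> \<le> h\<^sup>2 * (L * \<delta>)\<^sup>2"
      by (rule mult_left_mono) (use Fl in \<open>auto intro: power_mono\<close>)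
    finally have 1: "(\<Sum>i\<in>UNIV. (A1$i * (F1$i - F0$i))\<^sup>2) \<le> h\<^sup>2 * L\<^sup>2 * \<delta>\<^sup>2"
      by (simp add: power_mult_distrib)
    have "(\<Sum>i\<in>UNIV. ((c1 (blk i) - c0 (blk i)) * F0$i)\<^sup>2)
        = (\<Sum>r<d. \<Sum>i\<in>UNIV. if blk i = r then ((c1 (blk i) - c0 (blk i)) * F0$i)\<^sup>2 else 0)"
      by (rule group_sum[OF rng])
    also have "\<dots> = (\<Sum>r<d. (c1 r - c0 r)\<^sup>2 * (norm (blkcomp blk r F0))\<^sup>2)"
      unfolding blkcomp_norm2 sum_distrib_left
      by (auto intro!: sum.cong simp: power_mult_distrib)
    also have "\<dots> \<le> (\<Sum>r<d. (\<alpha> * \<delta>)\<^sup>2 * B\<^sup>2)"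
    proof (rule sum_mono)
      fix r assume "r \<in> {..<d}"
      hence "(c1 r - c0 r)\<^sup>2 \<le> (\<alpha> * \<delta>)\<^sup>2" "(norm (blkcomp blk r F0))\<^sup>2 \<le> B\<^sup>2"
        using cl FB sq_le_of_abs_le by auto
      thus "(c1 r - c0 r)\<^sup>2 * (norm (blkcomp blk r F0))\<^sup>2 \<le> (\<alpha> * \<delta>)\<^sup>2 * B\<^sup>2"
        by (simp add: mult_mono)
    qed
    also have "\<dots> = real d * \<alpha>\<^sup>2 * B\<^sup>2 * \<delta>\<^sup>2" by (simp add: power_mult_distrib)
    finally show ?thesis using 1 by linarith
  qed
  also have "\<dots> = 2 * (h\<^sup>2 * L\<^sup>2 + real d * \<alpha>\<^sup>2 * B\<^sup>2) * \<delta>\<^sup>2" by (simp add: algebra_simps)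
  finally show ?thesis .
qed

lemma norm_diff_sq_le: "(norm (a - b :: 'a::real_normed_vector))\<^sup>2 \<le> 2 * (norm a)\<^sup>2 + 2 * (norm b)\<^sup>2"
proof -
  have "norm (a - b) \<le> norm a + norm b" by (rule norm_triangle_ineq4)
  hence "(norm (a - b))\<^sup>2 \<le> (norm a + norm b)\<^sup>2" by (simp add: power_mono)
  also have "\<dots> \<le> 2 * (norm a)\<^sup>2 + 2 * (norm b)\<^sup>2"
  proof -
    have "0 \<le> (norm a - norm b)\<^sup>2" by simp
    thus ?thesis by (simp add: power2_eq_square algebra_simps)
  qed
  finally show ?thesis .
qed

lemma cross_bound:
  fixes \<omega> u xt xp xh :: "real^'n::finite"
  assumes wl: "\<forall>i. l \<le> \<omega>$i" and wh: "\<forall>i. \<omega>$i \<le> h" and h0: "0 \<le> h" and l0: "0 \<le> l"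
    and un: "(norm u)\<^sup>2 \<le> 2 * C * (norm (xt - xp))\<^sup>2"
    and eta: "16 * \<eta>\<^sup>2 * (h * C) \<le> l"
  shows "\<eta>\<^sup>2 * wip \<omega> u u \<le> (wip \<omega> (xt - xh) (xt - xh) + wip \<omega> (xp - xh) (xp - xh)) / 4"
proof -
  have "\<eta>\<^sup>2 * wip \<omega> u u \<le> \<eta>\<^sup>2 * (h * (norm u)\<^sup>2)"
    by (rule mult_left_mono) (use wip_sq_upper[OF wh] in auto)
  also have "\<dots> \<le> \<eta>\<^sup>2 * (h * (2 * C * (norm (xt - xp))\<^sup>2))"
    by (intro mult_left_mono un h0) auto
  also have "\<dots> = (16 * \<eta>\<^sup>2 * (h * C)) * (norm (xt - xp))\<^sup>2 / 8" by (simp add: algebra_simps)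
  also have "\<dots> \<le> l * (norm (xt - xp))\<^sup>2 / 8"
    by (intro divide_right_mono mult_right_mono eta) auto
  also have "\<dots> \<le> l * (2 * (norm (xt - xh))\<^sup>2 + 2 * (norm (xp - xh))\<^sup>2) / 8"
  proof -
    have "xt - xp = (xt - xh) - (xp - xh)" by simp
    hence "(norm (xt - xp))\<^sup>2 \<le> 2 * (norm (xt - xh))\<^sup>2 + 2 * (norm (xp - xh))\<^sup>2"
      using norm_diff_sq_le by metis
    moreover note l0
    ultimately show ?thesis by (intro divide_right_mono mult_left_mono) auto
  qed
  also have "\<dots> = (l * (norm (xt - xh))\<^sup>2 + l * (norm (xp - xh))\<^sup>2) / 4" by (simp add: algebra_simps)
  also have "\<dots> \<le> (wip \<omega> (xt - xh) (xt - xh) + wip \<omega> (xp - xh) (xp - xh)) / 4"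
    using wip_sq_lower[OF wl, of "xt - xh"] wip_sq_lower[OF wl, of "xp - xh"] by simp
  finally show ?thesis .
qed

lemma inner_blkcomp: "inner u (blkcomp blk r v) = (\<Sum>i\<in>UNIV. if blk i = r then u$i * v$i else 0)"
  unfolding inner_vec_def by (auto simp: blkcomp_nth intro!: sum.cong)

lemma inner_blkcomp': "inner (blkcomp blk r u) v = (\<Sum>i\<in>UNIV. if blk i = r then u$i * v$i else 0)"
  unfolding inner_vec_def by (auto simp: blkcomp_nth intro!: sum.cong)

lemma gap_block:
  fixes blk :: "'n::finite \<Rightarrow> nat"
  assumes X: "X = prodset blk d Z" and cl: "closed X" and cv: "convex X" and ne: "X \<noteq> {}"
    and r: "r < d" and bZ: "bounded (Z r)" and Dm: "diameter (Z r) \<le> Dm" and Dm0: "0 \<le> Dm"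
    and xt: "xt \<in> X" and xs: "xs \<in> X"
    and xh': "xh' = closest_point X (xh - \<eta> *\<^sub>R (At \<circ>\<^sub>c Ft))"
    and Atc: "\<forall>i. At$i = c (blk i)" and Atl: "\<forall>i. l \<le> At$i" and l0: "0 < l" and eta: "0 < \<eta>"
    and FB: "norm (blkcomp blk r Ft) \<le> B"
  shows "inner (xt - xs) (blkcomp blk r Ft) \<le> Dm * norm (xh - xh') / (\<eta> * l) + B * norm (xt - xh')"
proof -
  have p: "xh' \<in> X" using closest_point_in_set[OF cl ne] xh' by simp
  have vi: "\<forall>z\<in>X. inner ((xh - \<eta> *\<^sub>R (At \<circ>\<^sub>c Ft)) - xh') (z - xh') \<le> 0"
    using closest_point_dot[OF cv cl] xh' by blast
  have split: "inner (xt - xs) (blkcomp blk r Ft) = inner (xt - xh') (blkcomp blk r Ft) + inner (xh' - xs) (blkcomp blk r Ft)"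
    by (simp add: inner_diff_left)
  have 1: "inner (xt - xh') (blkcomp blk r Ft) \<le> B * norm (xt - xh')"
  proof -
    have "inner (xt - xh') (blkcomp blk r Ft) \<le> norm (xt - xh') * norm (blkcomp blk r Ft)"
      by (rule norm_cauchy_schwarz)
    also have "\<dots> \<le> norm (xt - xh') * B" by (rule mult_left_mono[OF FB]) simp
    finally show ?thesis by (simp add: mult.commute)
  qed
  have K0: "0 \<le> Dm * norm (xh - xh') / (\<eta> * l)" using Dm0 eta l0 by simp
  have 2: "inner (xh' - xs) (blkcomp blk r Ft) \<le> Dm * norm (xh - xh') / (\<eta> * l)"
  proof (cases "\<exists>i. blk i = r")
    case False
    hence "blkcomp blk r Ft = 0" by (auto simp: vec_eq_iff blkcomp_nth)
    thus ?thesis using K0 by simp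
  next
    case True
    then obtain i0 where i0: "blk i0 = r" by blast
    have cl': "l \<le> c r" using Atl Atc i0 by metis
    let ?G = "inner (xh' - xs) (blkcomp blk r Ft)"
    have bvi: "(\<Sum>i\<in>UNIV. if blk i = r then ((xh - \<eta> *\<^sub>R (At \<circ>\<^sub>c Ft)) - xh')$i * (xs - xh')$i else 0) \<le> 0"
      by (rule block_vi[OF X p xs vi])
    have "(\<Sum>i\<in>UNIV. if blk i = r then ((xh - \<eta> *\<^sub>R (At \<circ>\<^sub>c Ft)) - xh')$i * (xs - xh')$i else 0)
        = inner (blkcomp blk r (xh - xh')) (xs - xh') + \<eta> * c r * ?G"
      unfolding inner_blkcomp inner_blkcomp' sum_distrib_left sum.distrib[symmetric]
      by (rule sum.cong) (auto simp: cmul_def Atc algebra_simps)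
    with bvi have a: "\<eta> * c r * ?G \<le> - inner (blkcomp blk r (xh - xh')) (xs - xh')" by linarith
    have bd: "blkcomp blk r xh' - blkcomp blk r xs = blkcomp blk r (xh' - xs)"
      by (simp add: vec_eq_iff blkcomp_nth)
    have "- inner (blkcomp blk r (xh - xh')) (xs - xh') = inner (xh - xh') (blkcomp blk r xh' - blkcomp blk r xs)"
      unfolding bd inner_blkcomp inner_blkcomp' sum_negf[symmetric]
      by (rule sum.cong) (auto simp: algebra_simps)
    also have "\<dots> \<le> norm (xh - xh') * norm (blkcomp blk r xh' - blkcomp blk r xs)"
      by (rule norm_cauchy_schwarz)
    also have "\<dots> \<le> norm (xh - xh') * Dm"
    proof (rule mult_left_mono)
      have "blkcomp blk r xh' \<in> Z r" "blkcomp blk r xs \<in> Z r" using p xs r X by (auto simp: prodset_def)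
      hence "dist (blkcomp blk r xh') (blkcomp blk r xs) \<le> diameter (Z r)"
        by (rule diameter_bounded_bound[OF bZ])
      thus "norm (blkcomp blk r xh' - blkcomp blk r xs) \<le> Dm" using Dm by (simp add: dist_norm)
    qed simp
    finally have b: "\<eta> * c r * ?G \<le> Dm * norm (xh - xh')" using a by (simp add: mult.commute)
    show ?thesis
    proof (cases "?G \<le> 0")
      case True thus ?thesis using K0 by linarith
    next
      case False
      have "\<eta> * l * ?G \<le> \<eta> * c r * ?G"
        using False cl' eta by (intro mult_right_mono mult_left_mono) auto
      hence "\<eta> * l * ?G \<le> Dm * norm (xh - xh')" using b by linarith
      thus ?thesis using eta l0 by (simp add: field_simps)
    qed
  qed
  show ?thesis using split 1 2 by linarith
qed

lemma inner_blk_sum: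
  assumes "\<forall>i. blk i < d"
  shows "inner u F = (\<Sum>r<d. inner u (blkcomp blk r F))"
proof -
  have "inner u F = inner u (\<Sum>r<d. blkcomp blk r F)" using blkcomp_sum[OF assms] by simp
  also have "\<dots> = (\<Sum>r<d. inner u (blkcomp blk r F))" by (rule inner_sum_right)
  finally show ?thesis .
qed

theorem corollary3:
  fixes blk :: "'n::finite \<Rightarrow> nat" and d :: nat
    and Z :: "nat \<Rightarrow> (real^'n) set"
    and F :: "real^'n \<Rightarrow> real^'n"
    and a w :: "nat \<Rightarrow> real^'n \<Rightarrow> real"
    and L \<alpha> l h \<gamma> \<eta> :: real and T :: nat
    and x xh :: "nat \<Rightarrow> real^'n"
  defines "X \<equiv> prodset blk d Z"
  defines "A \<equiv> (\<lambda>y. blkvec blk d (\<lambda>r. a r y))"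
  defines "W \<equiv> (\<lambda>y. blkvec blk d (\<lambda>r. w r y))"
  assumes d_pos: "d \<ge> 1"
    and blk_range: "\<forall>i. blk i < d"
    and Z_sub: "\<forall>r<d. Z r \<subseteq> {z. \<forall>i. blk i \<noteq> r \<longrightarrow> z $ i = 0}"
    and Z_ne: "\<forall>r<d. Z r \<noteq> {}"
    and Z_convex: "\<forall>r<d. convex (Z r)"
    and Z_compact: "\<forall>r<d. compact (Z r)"
    and F_lip: "L-lipschitz_on X F"
    and a_lip: "\<forall>r<d. \<alpha>-lipschitz_on X (a r)"
    and l_pos: "0 < l"
    and A_bounds: "\<forall>y\<in>X. \<forall>i. l \<le> A y $ i \<and> A y $ i \<le> h"
    and W_bounds: "\<forall>y\<in>X. \<forall>i. l \<le> W y $ i \<and> W y $ i \<le> h"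
    and gamma_pos: "\<gamma> > 0"
    and minty: "\<forall>(T'::nat) (s::nat \<Rightarrow> real^'n). (\<forall>t\<in>{1..T'}. s t \<in> X) \<longrightarrow>
                  (\<exists>xs\<in>X. (1 / real T') * (\<Sum>t=1..T'. inner (s t - xs) (F (s t) \<circ>\<^sub>c A (s t) \<circ>\<^sub>c W xs)) \<ge> - \<gamma>)"
    and eta_pos: "\<eta> > 0"
    and eta_le: "16 * \<eta>\<^sup>2 * (h ^ 3 * L\<^sup>2 + h * (BF blk d X F)\<^sup>2 * \<alpha>\<^sup>2 * real d) \<le> l"
    and T_pos: "T \<ge> 1"
    and init: "x 0 \<in> X" "xh 1 = x 0"
    and step_x: "\<forall>t\<ge>1. x t = closest_point X (xh t - \<eta> *\<^sub>R (A (x (t - 1)) \<circ>\<^sub>c F (x (t - 1))))"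
    and step_xh: "\<forall>t\<ge>1. xh (t + 1) = closest_point X (xh t - \<eta> *\<^sub>R (A (x t) \<circ>\<^sub>c F (x t)))"
  shows "\<exists>t\<in>{1..T}. \<forall>xs\<in>X.
           inner (x t - xs) (F (x t))
           \<le> 2 * real d * ((MAX r\<in>{..<d}. diameter (Z r)) / (\<eta> * l) + h * BF blk d X F / l)
               * sqrt (4 * \<eta> * \<gamma> / l + 2 * (diameter X)\<^sup>2 * h / (l * real T))"
proof -
  let ?B = "BF blk d X F"
  let ?Dm = "MAX r\<in>{..<d}. diameter (Z r)"
  have rng: "\<forall>i. blk i < d" by (rule blk_range)
  have Zb: "\<forall>r<d. bounded (Z r)" "\<forall>r<d. closed (Z r)"
    using Z_compact compact_imp_bounded compact_imp_closed by auto
  have Xcl: "closed X" unfolding X_def by (rule prodset_closed[OF Zb(2)])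
  have Xcv: "convex X" unfolding X_def by (rule prodset_convex[OF Z_convex])
  have Xne: "X \<noteq> {}" unfolding X_def by (rule prodset_nonempty[OF Z_ne Z_sub])
  have Xb: "bounded X" unfolding X_def by (rule prodset_bounded[OF Zb(1) rng])
  have Xc: "compact X" using Xcl Xb by (simp add: compact_eq_bounded_closed)
  have Xdef': "X = prodset blk d Z" by (simp add: X_def)
  have xX: "x t \<in> X" for t
  proof (cases "t = 0")
    case True thus ?thesis using init by simp
  next
    case False thus ?thesis using step_x closest_point_in_set[OF Xcl Xne] by simp
  qed
  have xhX: "xh t \<in> X" if "t \<ge> 1" for t
  proof (cases "t = 1")
    case True thus ?thesis using init by simp
  next
    case False
    have s: "t - 1 \<ge> 1" "t = (t - 1) + 1" using that False by auto
    have "xh ((t - 1) + 1) = closest_point X (xh (t-1) - \<eta> *\<^sub>R (A (x (t-1)) \<circ>\<^sub>c F (x (t-1))))"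
      using step_xh s(1) by blast
    thus ?thesis using s(2) closest_point_in_set[OF Xcl Xne] by metis
  qed
  have Anth: "A y $ i = a (blk i) y" for y i unfolding A_def using rng blkvec_nth by metis
  have Wnth: "W y $ i = w (blk i) y" for y i unfolding W_def using rng blkvec_nth by metis
  obtain y0 where y0: "y0 \<in> X" using Xne by blast
  have lh: "l \<le> h" using A_bounds y0 by fastforce
  have h0: "0 \<le> h" using lh l_pos by linarith
  have Fc: "continuous_on X F" by (rule lipschitz_on_continuous_on[OF F_lip])
  have "bounded (F ` X)" using compact_continuous_image[OF Fc Xc] compact_imp_bounded by blast
  then obtain M where M: "\<And>y. y \<in> X \<Longrightarrow> norm (F y) \<le> M" by (auto simp: bounded_iff)
  have FB: "norm (blkcomp blk r (F y)) \<le> ?B" if "y \<in> X" "r < d" for y r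
  proof -
    have "norm (blkcomp blk r (F y)) \<le> (SUP x\<in>X. norm (blkcomp blk r (F x)))"
    proof (rule cSUP_upper[OF that(1)])
      show "bdd_above ((\<lambda>x. norm (blkcomp blk r (F x))) ` X)"
        by (rule bdd_aboveI2[where M=M]) (meson M blkcomp_norm_le order_trans)
    qed
    also have "\<dots> \<le> ?B" unfolding BF_def by (rule Max_ge) (use that in auto)
    finally show ?thesis .
  qed
  have B0: "0 \<le> ?B"
  proof -
    have "0 < d" using d_pos by simp
    hence "norm (blkcomp blk 0 (F y0)) \<le> ?B" using FB[OF y0] by blast
    thus ?thesis using norm_ge_zero order_trans by blast
  qed
  have Dm: "diameter (Z r) \<le> ?Dm" if "r < d" for r by (rule Max_ge) (use that in auto)
  have Dm0: "0 \<le> ?Dm"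
  proof -
    have d0: "0 < d" using d_pos by simp
    hence "bounded (Z 0)" using Zb(1) by blast
    thus ?thesis using diameter_ge_0 Dm[OF d0] order_trans by blast
  qed
  have "\<forall>t\<in>{1..T}. x t \<in> X" using xX by blast
  then obtain xs where xs: "xs \<in> X"
    and mt: "(1 / real T) * (\<Sum>t=1..T. inner (x t - xs) (F (x t) \<circ>\<^sub>c A (x t) \<circ>\<^sub>c W xs)) \<ge> - \<gamma>"
    using minty by blast
  define \<omega> where "\<omega> = W xs"
  have wl: "\<forall>i. l \<le> \<omega>$i" and wh: "\<forall>i. \<omega>$i \<le> h" using W_bounds xs by (auto simp: \<omega>_def)
  have wnn: "\<forall>i. 0 \<le> \<omega>$i" using wl l_pos by (meson less_le_trans less_imp_le)
  have wc: "\<forall>i. \<omega>$i = w (blk i) xs" by (simp add: \<omega>_def Wnth)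
  define g where "g t = A (x t) \<circ>\<^sub>c F (x t)" for t
  define E where "E t = \<eta> * wip \<omega> (g t) (x t - xs)" for t
  define P where "P t = wip \<omega> (x t - xh t) (x t - xh t)" for t
  define Q where "Q t = wip \<omega> (x t - xh (t+1)) (x t - xh (t+1))" for t
  define \<phi> where "\<phi> t = wip \<omega> (xh t - xs) (xh t - xs)" for t
  have inner_eq: "inner (x t - xs) (F (x t) \<circ>\<^sub>c A (x t) \<circ>\<^sub>c W xs) = wip \<omega> (g t) (x t - xs)" for t
    unfolding inner_vec_def wip_def g_def \<omega>_def cmul_def
    by (rule sum.cong) (auto simp: algebra_simps)
  have sumE: "(\<Sum>t=1..T. E t) \<ge> - \<eta> * \<gamma> * real T"
  proof -
    have "- \<gamma> * real T \<le> (\<Sum>t=1..T. wip \<omega> (g t) (x t - xs))"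
      using mt T_pos inner_eq by (simp add: field_simps)
    hence "\<eta> * (- \<gamma> * real T) \<le> \<eta> * (\<Sum>t=1..T. wip \<omega> (g t) (x t - xs))"
      by (rule mult_left_mono) (use eta_pos in simp)
    thus ?thesis by (simp add: E_def sum_distrib_left)
  qed
  have stepI: "E t \<le> \<phi> t / 2 - \<phi> (t+1) / 2 - P t / 2 - Q t / 2 + (P t + Q (t-1)) / 4" if t1: "t \<ge> 1" for t
  proof -
    have xt_eq: "x t = closest_point X (xh t - \<eta> *\<^sub>R g (t-1))" using step_x t1 by (simp add: g_def)
    have xh_eq: "xh (t+1) = closest_point X (xh t - \<eta> *\<^sub>R g t)" using step_xh t1 by (simp add: g_def)
    have VIa: "wip \<omega> ((xh t - \<eta> *\<^sub>R g (t-1)) - x t) (xh (t+1) - x t) \<le> 0"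
      using proj_wvi[OF Xdef' Xcl Xcv Xne rng wc wnn xhX[of "t+1"], of "xh t - \<eta> *\<^sub>R g (t-1)"] xt_eq by simp
    have VIb: "wip \<omega> ((xh t - \<eta> *\<^sub>R g t) - xh (t+1)) (xs - xh (t+1)) \<le> 0"
      using proj_wvi[OF Xdef' Xcl Xcv Xne rng wc wnn xs, of "xh t - \<eta> *\<^sub>R g t"] xh_eq by simp
    have VIc: "wip \<omega> ((xh t - \<eta> *\<^sub>R g t) - xh (t+1)) (x t - xh (t+1)) \<le> 0"
      using proj_wvi[OF Xdef' Xcl Xcv Xne rng wc wnn xX[of t], of "xh t - \<eta> *\<^sub>R g t"] xh_eq by simp
    have gd: "(norm (g t - g (t-1)))\<^sup>2 \<le> 2 * (h\<^sup>2 * L\<^sup>2 + real d * \<alpha>\<^sup>2 * ?B\<^sup>2) * (norm (x t - x (t-1)))\<^sup>2"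
      unfolding g_def
    proof (rule g_diff[OF rng])
      show "\<forall>i. \<bar>A (x t) $ i\<bar> \<le> h"
      proof
        fix i have "l \<le> A (x t) $ i \<and> A (x t) $ i \<le> h" using A_bounds xX by blast
        thus "\<bar>A (x t) $ i\<bar> \<le> h" using l_pos by linarith
      qed
      show "\<forall>i. A (x t) $ i = a (blk i) (x t)" by (simp add: Anth)
      show "\<forall>i. A (x (t-1)) $ i = a (blk i) (x (t-1))" by (simp add: Anth)
      show "\<forall>r<d. \<bar>a r (x t) - a r (x (t-1))\<bar> \<le> \<alpha> * norm (x t - x (t-1))"
      proof (intro allI impI)
        fix r assume r: "r < d"
        have "dist (a r (x t)) (a r (x (t-1))) \<le> \<alpha> * dist (x t) (x (t-1))"
          using a_lip r xX lipschitz_onD by blast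
        thus "\<bar>a r (x t) - a r (x (t-1))\<bar> \<le> \<alpha> * norm (x t - x (t-1))" by (simp add: dist_real_def dist_norm)
      qed
      have "dist (F (x t)) (F (x (t-1))) \<le> L * dist (x t) (x (t-1))"
        using F_lip xX lipschitz_onD by blast
      thus "norm (F (x t) - F (x (t-1))) \<le> L * norm (x t - x (t-1))" by (simp add: dist_norm)
      show "\<forall>r<d. norm (blkcomp blk r (F (x (t-1)))) \<le> ?B" using FB xX by blast
    qed
    have cross: "\<eta>\<^sup>2 * wip \<omega> (g t - g (t-1)) (g t - g (t-1))
        \<le> (wip \<omega> (x t - xh t) (x t - xh t) + wip \<omega> (x (t-1) - xh t) (x (t-1) - xh t)) / 4"
    proof (rule cross_bound[OF wl wh h0 _ gd])
      show "0 \<le> l" using l_pos by simp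
      show "16 * \<eta>\<^sup>2 * (h * (h\<^sup>2 * L\<^sup>2 + real d * \<alpha>\<^sup>2 * ?B\<^sup>2)) \<le> l"
        using eta_le by (simp add: algebra_simps power3_eq_cube power2_eq_square)
    qed
    have "Q (t-1) = wip \<omega> (x (t-1) - xh t) (x (t-1) - xh t)" using t1 by (simp add: Q_def)
    hence cross': "\<eta>\<^sup>2 * wip \<omega> (g t - g (t-1)) (g t - g (t-1)) \<le> (P t + Q (t-1)) / 4"
      using cross by (simp add: P_def)
    show ?thesis
      using step_ineq[OF wnn VIa VIb VIc cross'] unfolding E_def \<phi>_def P_def Q_def by simp
  qed
  have Q0: "Q 0 = 0" using init by (simp add: Q_def wip_def)
  have sumI: "(\<Sum>t=1..n. E t) \<le> \<phi> 1 / 2 - \<phi> (n+1) / 2 - (\<Sum>t=1..n. P t + Q t) / 4 - Q n / 4" for n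
  proof (induction n)
    case 0 thus ?case using Q0 by simp
  next
    case (Suc n)
    have e1: "(\<Sum>t=1..Suc n. E t) = (\<Sum>t=1..n. E t) + E (Suc n)" by simp
    have e2: "(\<Sum>t=1..Suc n. P t + Q t) = (\<Sum>t=1..n. P t + Q t) + (P (Suc n) + Q (Suc n))" by simp
    have st: "E (Suc n) \<le> \<phi> (Suc n) / 2 - \<phi> (Suc n + 1) / 2 - P (Suc n) / 2 - Q (Suc n) / 2 + (P (Suc n) + Q n) / 4"
      using stepI[of "Suc n"] by simp
    have ih: "(\<Sum>t=1..n. E t) \<le> \<phi> 1 / 2 - \<phi> (Suc n) / 2 - (\<Sum>t=1..n. P t + Q t) / 4 - Q n / 4"
      using Suc.IH by simp
    show ?case unfolding e1 e2 using st ih by argo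
  qed
  have phi_nn: "0 \<le> \<phi> t" for t unfolding \<phi>_def by (rule wip_sq_nonneg[OF wnn])
  have Q_nn: "0 \<le> Q t" for t unfolding Q_def by (rule wip_sq_nonneg[OF wnn])
  have phi1: "\<phi> 1 \<le> h * (diameter X)\<^sup>2"
  proof -
    have "\<phi> 1 \<le> h * (norm (x 0 - xs))\<^sup>2" unfolding \<phi>_def using init wip_sq_upper[OF wh] by simp
    also have "\<dots> \<le> h * (diameter X)\<^sup>2"
    proof (rule mult_left_mono[OF _ h0])
      have "dist (x 0) xs \<le> diameter X" by (rule diameter_bounded_bound[OF Xb xX xs])
      thus "(norm (x 0 - xs))\<^sup>2 \<le> (diameter X)\<^sup>2" by (simp add: dist_norm power_mono)
    qed
    finally show ?thesis .
  qed
  have sumPQ: "(\<Sum>t=1..T. P t + Q t) \<le> 2 * h * (diameter X)\<^sup>2 + 4 * \<eta> * \<gamma> * real T"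
    using sumI[of T] sumE phi_nn[of "T+1"] Q_nn[of T] phi1 by linarith
  define K where "K = (2 * h * (diameter X)\<^sup>2 + 4 * \<eta> * \<gamma> * real T) / real T"
  obtain t where t: "t \<in> {1..T}" and tK: "P t + Q t \<le> K"
  proof (rule ccontr)
    assume "\<not> thesis"
    with that have allgt: "\<forall>t\<in>{1..T}. K < P t + Q t" by (meson not_le)
    have "(\<Sum>t=1..T. K) < (\<Sum>t=1..T. P t + Q t)"
      by (rule sum_strict_mono) (use allgt T_pos in auto)
    moreover have "(\<Sum>t=1..T. K) = 2 * h * (diameter X)\<^sup>2 + 4 * \<eta> * \<gamma> * real T"
      using T_pos by (simp add: K_def)
    ultimately show False using sumPQ by linarith
  qed
  have t1: "t \<ge> 1" using t by simp
  define MM where "MM = 4 * \<eta> * \<gamma> / l + 2 * (diameter X)\<^sup>2 * h / (l * real T)"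
  define p where "p = norm (x t - xh t)"
  define q where "q = norm (x t - xh (t+1))"
  have pqM: "p\<^sup>2 + q\<^sup>2 \<le> MM"
  proof -
    have "l * (p\<^sup>2 + q\<^sup>2) \<le> P t + Q t"
      using wip_sq_lower[OF wl, of "x t - xh t"] wip_sq_lower[OF wl, of "x t - xh (t+1)"]
      by (simp add: P_def Q_def p_def q_def algebra_simps)
    also have "\<dots> \<le> K" by (rule tK)
    also have "K = l * MM" using l_pos T_pos by (simp add: K_def MM_def field_simps)
    finally show ?thesis using l_pos by simp
  qed
  have p0: "0 \<le> p" and q0: "0 \<le> q" by (simp_all add: p_def q_def)
  have M0: "0 \<le> MM" using pqM zero_le_power2[of p] zero_le_power2[of q] by linarith
  have pq2: "p + q \<le> 2 * sqrt MM"
  proof -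
    have "(p + q)\<^sup>2 \<le> 4 * MM"
    proof -
      have "0 \<le> (p - q)\<^sup>2" by simp
      hence "(p + q)\<^sup>2 \<le> 2 * (p\<^sup>2 + q\<^sup>2)" by (simp add: power2_eq_square algebra_simps)
      thus ?thesis using pqM M0 by argo
    qed
    hence "sqrt ((p + q)\<^sup>2) \<le> sqrt (4 * MM)" by (rule real_sqrt_le_mono)
    thus ?thesis using p0 q0 by (simp add: real_sqrt_mult)
  qed
  have qM: "q \<le> sqrt MM"
  proof -
    have "q\<^sup>2 \<le> MM" using pqM zero_le_power2[of p] by linarith
    hence "sqrt (q\<^sup>2) \<le> sqrt MM" by (rule real_sqrt_le_mono)
    thus ?thesis using q0 by simp
  qed
  show ?thesis
  proof (rule bexI[OF _ t], intro ballI)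
    fix xs' assume xs': "xs' \<in> X"
    have blk_bound: "inner (x t - xs') (blkcomp blk r (F (x t))) \<le> ?Dm * norm (xh t - xh (t+1)) / (\<eta> * l) + ?B * q"
      if r: "r < d" for r
      unfolding q_def
    proof (rule gap_block[OF Xdef' Xcl Xcv Xne r _ Dm[OF r] Dm0 xX xs'])
      show "bounded (Z r)" using Zb r by blast
      show "xh (t+1) = closest_point X (xh t - \<eta> *\<^sub>R (A (x t) \<circ>\<^sub>c F (x t)))" using step_xh t1 by simp
      show "\<forall>i. A (x t) $ i = a (blk i) (x t)" by (simp add: Anth)
      show "\<forall>i. l \<le> A (x t) $ i" using A_bounds xX by blast
      show "0 < l" by (rule l_pos)
      show "0 < \<eta>" by (rule eta_pos)
      show "norm (blkcomp blk r (F (x t))) \<le> ?B" using FB xX r by blast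
    qed
    have hh: "norm (xh t - xh (t+1)) \<le> p + q"
    proof -
      have "xh t - xh (t+1) = (x t - xh (t+1)) - (x t - xh t)" by simp
      hence "norm (xh t - xh (t+1)) \<le> norm (x t - xh (t+1)) + norm (x t - xh t)"
        by (metis norm_triangle_ineq4)
      thus ?thesis by (simp add: p_def q_def)
    qed
    have blk2: "?Dm * norm (xh t - xh (t+1)) / (\<eta> * l) + ?B * q
        \<le> 2 * (?Dm / (\<eta> * l) + h * ?B / l) * sqrt MM"
    proof -
      have "?Dm * norm (xh t - xh (t+1)) / (\<eta> * l) \<le> ?Dm * (2 * sqrt MM) / (\<eta> * l)"
        using hh pq2 Dm0 eta_pos l_pos by (intro divide_right_mono mult_left_mono) auto
      moreover have "?B * q \<le> 2 * (h * ?B / l) * sqrt MM"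
      proof -
        have "?B * q \<le> ?B * sqrt MM" using qM B0 by (simp add: mult_left_mono)
        also have "\<dots> \<le> (2 * h / l) * (?B * sqrt MM)"
        proof -
          have "1 \<le> 2 * h / l" using lh l_pos by (simp add: field_simps)
          moreover have "0 \<le> ?B * sqrt MM" using B0 M0 by simp
          ultimately show ?thesis by (metis mult_1 mult_right_mono)
        qed
        finally show ?thesis by (simp add: algebra_simps)
      qed
      ultimately show ?thesis by (simp add: algebra_simps)
    qed
    have "inner (x t - xs') (F (x t)) = (\<Sum>r<d. inner (x t - xs') (blkcomp blk r (F (x t))))"
      by (rule inner_blk_sum[OF rng])
    also have "\<dots> \<le> (\<Sum>r<d. 2 * (?Dm / (\<eta> * l) + h * ?B / l) * sqrt MM)"
      by (rule sum_mono) (use blk_bound blk2 in force)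
    also have "\<dots> = 2 * real d * (?Dm / (\<eta> * l) + h * ?B / l) * sqrt MM" by simp
    finally show "inner (x t - xs') (F (x t))
           \<le> 2 * real d * (?Dm / (\<eta> * l) + h * BF blk d X F / l)
               * sqrt (4 * \<eta> * \<gamma> / l + 2 * (diameter X)\<^sup>2 * h / (l * real T))"
      by (simp add: MM_def)
  qed
qed

end
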